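(* Let $X_j^t$ be a fresh sample from the target domain, let $Z_j^t=\ell^{\mathrm{ent}}(f_{\hat\theta+\omega}(X_j^t))$ be the corresponding target entropy, and let $u_j=F_s(Z_j^t)$. Assume that $F_s$ is invertible and that $Z_j^t$ is a continuous random variable, and suppose the betting function is the true likelihood ratio $$b^{\mathrm{opt}}_u(u)=\frac{dF_t^j\big(F_s^{-1}(u)\big)}{dF_s\big(F_s^{-1}(u)\big)},\qquad u\in[0,1].$$ Let $Q^{\mathrm{opt}}(u)=\int_0^u b^{\mathrm{opt}}_u(v)\,dv$ (the alternative distribution on $[0,1]$ whose density with respect to the uniform null $\mathrm{Uniform}(0,1)$ is $b^{\mathrm{opt}}_u$). Then the adapted value $\tilde Z_j^t=F_s^{-1}\big(Q^{\mathrm{opt}}(u_j)\big)$, i.e. the map $z\mapsto F_s^{-1}\big(Q^{\mathrm{opt}}(F_s(z))\big)$ applied to $Z_j^t$, is the optimal transport map from the distribution of the target entropies $Z_j^t$ to the distribution of the source entropies $Z^s$ with respect to the Wasserstein distance.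
   Context: A $K$-class classifier $f_\theta$ maps an input $x\in\mathbb{R}^d$ to a probability vector $(f_\theta(x)_1,\dots,f_\theta(x)_K)$. The entropy loss is $\ell^{\mathrm{ent}}(f_\theta(x))=-\sum_{y=1}^K f_\theta(x)_y\log f_\theta(x)_y$. $f_{\hat\theta}$ is a classifier pretrained on a source distribution $P^s$, and $f_{\hat\theta+\omega}$ is an adapted classifier (parameters modified by $\omega$). The source entropy is $Z^s=\ell^{\mathrm{ent}}(f_{\hat\theta}(X^s))$ with $X^s\sim P^s$; $F_s$ denotes its CDF and $dF_s$ its density. The target entropy $Z_j^t$ has CDF $F_t^j$ with density $dF_t^j$. The optimal transport map between one-dimensional distributions is with respect to the Wasserstein distance as stated. *)

theory Defs
  imports "HOL-Probability.Probability"
begin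

definition ent_loss :: "real ^ 'k \<Rightarrow> real" where
  "ent_loss q = - (\<Sum>y\<in>UNIV. q $ y * ln (q $ y))"

definition prob_vector :: "real ^ 'k \<Rightarrow> bool" where
  "prob_vector q \<longleftrightarrow> (\<forall>y. 0 \<le> q $ y) \<and> (\<Sum>y\<in>UNIV. q $ y) = 1"

definition couplings :: "real measure \<Rightarrow> real measure \<Rightarrow> (real \<times> real) measure set" where
  "couplings \<mu> \<nu> = {\<pi>. sets \<pi> = sets (borel :: (real \<times> real) measure) \<and> prob_space \<pi>
        \<and> distr \<pi> borel fst = \<mu> \<and> distr \<pi> borel snd = \<nu>}"

definition wasserstein_pow :: "real \<Rightarrow> real measure \<Rightarrow> real measure \<Rightarrow> ennreal" where
  "wasserstein_pow p \<mu> \<nu> =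
     (INF \<pi>\<in>couplings \<mu> \<nu>. \<integral>\<^sup>+ xy. ennreal (\<bar>fst xy - snd xy\<bar> powr p) \<partial>\<pi>)"

definition optimal_transport_map ::
    "real \<Rightarrow> real measure \<Rightarrow> real measure \<Rightarrow> (real \<Rightarrow> real) \<Rightarrow> bool" where
  "optimal_transport_map p \<mu> \<nu> T \<longleftrightarrow>
     T \<in> borel_measurable \<mu> \<and> distr \<mu> borel T = \<nu> \<and>
     (\<integral>\<^sup>+ z. ennreal (\<bar>z - T z\<bar> powr p) \<partial>\<mu>) = wasserstein_pow p \<mu> \<nu>"

end

theory Submission
  imports Defs
begin


definition U01 :: "real measure" where
  "U01 = density lborel (indicator {0..1})"

lemma U01_sets[simp, measurable_cong]: "sets U01 = sets borel"
  by (simp add: U01_def)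

lemma U01_space[simp]: "space U01 = UNIV"
  by (simp add: U01_def)

lemma emeasure_U01: assumes "A \<in> sets borel" shows "emeasure U01 A = emeasure lborel (A \<inter> {0..1})"
proof -
  have "emeasure U01 A = (\<integral>\<^sup>+x. indicator {0..1} x * indicator A x \<partial>lborel)"
    using assms unfolding U01_def by (subst emeasure_density) auto
  also have "\<dots> = (\<integral>\<^sup>+ x. indicator (A \<inter> {0..1}) x \<partial>lborel)"
    by (intro nn_integral_cong) (simp split: split_indicator)
  also have "\<dots> = emeasure lborel (A \<inter> {0..1})" using assms by (intro nn_integral_indicator) auto
  finally show ?thesis .
qed

lemma real_distribution_U01: "real_distribution U01"
proof -
  have "emeasure U01 (space U01) = 1" by (simp add: emeasure_U01)
  then show ?thesis unfolding real_distribution_def real_distribution_axioms_def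
    by (auto intro: prob_spaceI)
qed

lemma cdf_U01: "cdf U01 x = max 0 (min 1 x)"
proof -
  have "emeasure U01 {..x} = emeasure lborel ({..x} \<inter> {0..1})" by (simp add: emeasure_U01)
  also have "{..x} \<inter> {0..1} = (if x < 0 then {} else {0..min 1 x})" by auto
  finally have "emeasure U01 {..x} = ennreal (max 0 (min 1 x))"
    by (cases "x < 0") auto
  moreover have "max 0 (min 1 x) \<ge> 0" by simp
  ultimately show ?thesis unfolding cdf_def2 measure_def by (simp only: enn2real_ennreal)
qed

context
  fixes M :: "real measure"
  assumes M: "real_distribution M" and noatom: "\<And>x. measure M {x} = 0"
begin

interpretation real_distribution M by (rule M)

lemma cont_cdf: "continuous_on UNIV (cdf M)"
  using isCont_cdf noatom by (simp add: continuous_on_eq_continuous_at)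

lemma cdf_measurable[measurable]: "cdf M \<in> borel_measurable borel"
  by (rule borel_measurable_mono) (simp add: mono_def cdf_nondecreasing)

lemma cdf_ivt: assumes "0 < u" "u < 1" shows "\<exists>x. cdf M x = u"
proof -
  have "eventually (\<lambda>x. cdf M x < u) at_bot"
    using order_tendstoD(2)[OF cdf_lim_at_bot assms(1)] .
  then obtain a where a: "cdf M a < u" by (auto simp: eventually_at_bot_linorder)
  have "eventually (\<lambda>x. cdf M x > u) at_top"
    using order_tendstoD(1)[OF cdf_lim_at_top_prob assms(2)] .
  then obtain b0 where b0: "\<And>x. x \<ge> b0 \<Longrightarrow> cdf M x > u" by (auto simp: eventually_at_top_linorder)
  define b where "b = max a b0"
  have b: "cdf M b > u" and ab: "a \<le> b" using b0[of b] by (auto simp: b_def)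
  show ?thesis using IVT'[of "cdf M" a u b] a b ab cont_cdf
    by (meson continuous_on_subset less_imp_le subset_UNIV)
qed

lemma measure_cdf_le: "measure M {x. cdf M x \<le> u} = max 0 (min 1 u)"
proof -
  have main: "measure M {x. cdf M x \<le> u} = u" if u: "0 < u" "u < 1" for u
  proof -
    obtain x0 where x0: "cdf M x0 = u" using cdf_ivt u by blast
    let ?A = "{x. cdf M x \<le> u}"
    have "eventually (\<lambda>x. cdf M x > u) at_top"
      using order_tendstoD(1)[OF cdf_lim_at_top_prob u(2)] .
    then obtain b where b: "cdf M b > u" by (auto simp: eventually_at_top_linorder)
    have bdd: "bdd_above ?A"
    proof
      fix x assume "x \<in> ?A"
      then show "x \<le> b" using b cdf_nondecreasing[of b x] by (cases "x \<le> b") auto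
    qed
    have cl: "closed ?A" using cont_cdf by (intro closed_Collect_le) auto
    have ne: "?A \<noteq> {}" using x0 by auto
    define s where "s = Sup ?A"
    have sA: "s \<in> ?A" unfolding s_def using closed_contains_Sup[OF ne bdd cl] .
    have "x0 \<le> s" unfolding s_def using x0 bdd by (auto intro: cSup_upper)
    then have Fs: "cdf M s = u" using sA x0 cdf_nondecreasing[of x0 s] by auto
    have "?A = {..s}"
    proof
      show "?A \<subseteq> {..s}" unfolding s_def using bdd by (auto intro: cSup_upper)
      show "{..s} \<subseteq> ?A" using Fs cdf_nondecreasing by fastforce
    qed
    then show ?thesis using Fs by (simp add: cdf_def)
  qed
  show ?thesis
  proof (cases "u < 0")
    case True
    then have "{x. cdf M x \<le> u} = {}" using cdf_nonneg by (auto simp: not_le intro: less_le_trans)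
    then show ?thesis using True by simp
  next
    case False
    show ?thesis
    proof (cases "u \<ge> 1")
      case True
      then have "{x. cdf M x \<le> u} = UNIV" using cdf_bounded_prob by (auto intro: order_trans)
      then show ?thesis using True prob_space by simp
    next
      case False2: False
      show ?thesis
      proof (cases "u = 0")
        case True
        have "measure M {x. cdf M x \<le> 0} \<le> 0 + e" if e: "0 < e" for e
        proof (cases "e < 1")
          case True
          have "measure M {x. cdf M x \<le> 0} \<le> measure M {x. cdf M x \<le> e}"
            using e by (intro finite_measure_mono) auto
          then show ?thesis using main[of e] e True by simp
        next
          case False
          then show ?thesis by (simp add: order_trans[OF prob_le_1])
        qed
        then have "measure M {x. cdf M x \<le> 0} \<le> 0" by (rule field_le_epsilon)
        then show ?thesis using True by (simp add: measure_nonneg antisym)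
      next
        case False
        then show ?thesis using main[of u] \<open>\<not> u < 0\<close> False2 by simp
      qed
    qed
  qed
qed

lemma distr_cdf: "distr M borel (cdf M) = U01"
proof (rule cdf_unique)
  show "real_distribution (distr M borel (cdf M))" by simp
  show "real_distribution U01" by (rule real_distribution_U01)
  show "cdf (distr M borel (cdf M)) = cdf U01"
  proof
    fix x
    have "cdf (distr M borel (cdf M)) x = measure (distr M borel (cdf M)) {..x}" by (rule cdf_def2)
    also have "\<dots> = measure M (cdf M -` {..x} \<inter> space M)" by (rule measure_distr) measurable
    also have "cdf M -` {..x} \<inter> space M = {y. cdf M y \<le> x}" by auto
    finally show "cdf (distr M borel (cdf M)) x = cdf U01 x"
      by (simp add: measure_cdf_le cdf_U01)
  qed
qed

end


context
  fixes F :: "real \<Rightarrow> real" and S :: "real set"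
  assumes bij: "bij_betw F S {0<..<1}" and monoF: "mono F"
begin

lemma G_in: assumes "u \<in> {0<..<1}" shows "F (inv_into S F u) = u" "inv_into S F u \<in> S"
proof -
  have img: "F ` S = {0<..<1}" using bij by (simp add: bij_betw_def)
  show "F (inv_into S F u) = u" using assms img by (simp add: f_inv_into_f)
  show "inv_into S F u \<in> S" using assms img by (intro inv_into_into) simp
qed

lemma G_out: assumes "u \<notin> {0<..<1}" shows "inv_into S F u = inv_into S F 2"
proof -
  have img: "F ` S = {0<..<1}" using bij by (simp add: bij_betw_def)
  have "\<And>v x. v \<notin> {0<..<1} \<Longrightarrow> x \<in> S \<Longrightarrow> F x \<noteq> v" using img by blast
  then have "\<And>v. v \<notin> {0<..<1} \<Longrightarrow> (\<lambda>x. x \<in> S \<and> F x = v) = (\<lambda>x. False)"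
    by (auto simp: fun_eq_iff)
  then show ?thesis unfolding inv_into_def using assms by simp
qed

lemma G_mono: assumes "u \<in> {0<..<1}" "v \<in> {0<..<1}" "u \<le> v"
  shows "inv_into S F u \<le> inv_into S F v"
proof (rule ccontr)
  assume nt: "\<not> ?thesis"
  then have "F (inv_into S F v) \<le> F (inv_into S F u)" using monoF by (auto simp: mono_def)
  then have "v \<le> u" using G_in assms by simp
  then have "u = v" using assms by simp
  then show False using nt by simp
qed

lemma G_meas[measurable]: "inv_into S F \<in> borel_measurable borel"
proof -
  have "mono_on {0<..<1} (inv_into S F)" using G_mono by (auto simp: mono_on_def)
  then have "inv_into S F \<in> borel_measurable (restrict_space borel {0<..<1})"
    by (rule borel_measurable_mono_on_fnc)
  then have [measurable]: "(\<lambda>x. indicator {0<..<1} x * inv_into S F x) \<in> borel_measurable borel"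
    using borel_measurable_restrict_space_iff[of "{0<..<1}" borel "inv_into S F"] by simp
  have eq: "inv_into S F = (\<lambda>x. if x \<in> {0<..<1} then indicator {0<..<1} x * inv_into S F x else inv_into S F 2)"
  proof
    fix x show "inv_into S F x = (if x \<in> {0<..<1} then indicator {0<..<1} x * inv_into S F x else inv_into S F 2)"
      using G_out[of x] by (cases "x \<in> {0<..<1}") auto
  qed
  show ?thesis by (subst eq) measurable
qed

end

context
  fixes M :: "real measure"
  assumes M: "real_distribution M" and noatom: "\<And>x. measure M {x} = 0"
begin

interpretation real_distribution M by (rule M)

lemma flat_AE: "AE z in M. cdf M z \<in> {0<..<1} \<and> (\<forall>z'. cdf M z' = cdf M z \<longrightarrow> z' = z)"
proof -
  define C where "C = cdf M ` \<rat> \<union> {0, 1}"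
  have "countable C" unfolding C_def by (auto intro: countable_image simp: countable_rat)
  then have Cnull: "C \<in> null_sets lborel" by (rule countable_imp_null_set_lborel)
  then have Cb[measurable]: "C \<in> sets borel" by auto
  have "emeasure M (cdf M -` C \<inter> space M) = emeasure (distr M borel (cdf M)) C"
    by (subst emeasure_distr) (auto simp: cdf_measurable[OF M noatom])
  also have "\<dots> = emeasure lborel (C \<inter> {0..1})"
    using distr_cdf[OF M noatom] by (simp add: emeasure_U01)
  also have "\<dots> = 0" using Cnull by (metis Int_lower1 emeasure_mono le_zero_eq null_setsD1 null_setsD2)
  moreover have "cdf M \<in> borel_measurable M" using cdf_measurable[OF M noatom] by simp
  then have "cdf M -` C \<inter> space M \<in> sets M" using Cb by (rule measurable_sets)
  ultimately have N: "cdf M -` C \<inter> space M \<in> null_sets M"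
    by (auto intro!: null_setsI)
  show ?thesis
  proof (rule AE_I'[OF N], rule subsetI)
    fix z assume "z \<in> {z \<in> space M. \<not> (cdf M z \<in> {0<..<1} \<and> (\<forall>z'. cdf M z' = cdf M z \<longrightarrow> z' = z))}"
    then have nz: "\<not> (cdf M z \<in> {0<..<1} \<and> (\<forall>z'. cdf M z' = cdf M z \<longrightarrow> z' = z))" by simp
    show "z \<in> cdf M -` C \<inter> space M" 
    proof (cases "cdf M z \<in> {0<..<1}")
      case False
      then have "cdf M z = 0 \<or> cdf M z = 1"
        using cdf_nonneg[of z] cdf_bounded_prob[of z] by force
      then show ?thesis unfolding C_def by auto
    next
      case True
      then obtain z' where z': "cdf M z' = cdf M z" "z' \<noteq> z" using nz by auto
      have "\<exists>q\<in>\<rat>. cdf M q = cdf M z"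
      proof (cases "z < z'")
        case True
        then obtain q where q: "q \<in> \<rat>" "z < q" "q < z'" using Rats_dense_in_real by blast
        then have "cdf M z \<le> cdf M q" "cdf M q \<le> cdf M z'" using cdf_nondecreasing by auto
        then show ?thesis using q z' by (intro bexI[of _ q]) auto
      next
        case False
        then have "z' < z" using z' by auto
        then obtain q where q: "q \<in> \<rat>" "z' < q" "q < z" using Rats_dense_in_real by blast
        then have "cdf M z' \<le> cdf M q" "cdf M q \<le> cdf M z" using cdf_nondecreasing by auto
        then show ?thesis using q z' by (intro bexI[of _ q]) auto
      qed
      then show ?thesis unfolding C_def by (auto simp: image_iff) (metis)
    qed
  qed
qed

end


lemma density_noatom:
  fixes f :: "real \<Rightarrow> real"
  assumes [measurable]: "f \<in> borel_measurable borel"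
  shows "measure (density lborel f) {x} = 0"
proof -
  have "emeasure (density lborel f) {x} = (\<integral>\<^sup>+ y. ennreal (f y) * indicator {x} y \<partial>lborel)"
    by (subst emeasure_density) auto
  also have "\<dots> = (\<integral>\<^sup>+ y. 0 \<partial>(lborel::real measure))"
  proof (rule nn_integral_cong_AE)
    show "AE y in lborel. ennreal (f y) * indicator {x} y = 0"
      using AE_lborel_singleton[of x] by eventually_elim simp
  qed
  finally show ?thesis by (simp add: measure_def)
qed

lemma real_distribution_density:
  fixes f :: "real \<Rightarrow> real"
  assumes "prob_space (density lborel f)"
  shows "real_distribution (density lborel f)"
  using assms unfolding real_distribution_def real_distribution_axioms_def by simp

locale otsetup =
  fixes fs ft :: "real \<Rightarrow> real" and S :: "real set"
  assumes fs_meas[measurable]: "fs \<in> borel_measurable borel" and fs_nn: "\<And>z. 0 \<le> fs z"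
    and ft_meas[measurable]: "ft \<in> borel_measurable borel" and ft_nn: "\<And>z. 0 \<le> ft z"
    and ps: "prob_space (density lborel fs)" and pt: "prob_space (density lborel ft)"
    and bij: "bij_betw (cdf (density lborel fs)) S {0<..<1}"
    and lr: "AE z in lborel. fs z = 0 \<longrightarrow> ft z = 0"

context otsetup
begin

abbreviation "Ms \<equiv> density lborel fs"
abbreviation "Mt \<equiv> density lborel ft"
abbreviation "Fs \<equiv> cdf Ms"
abbreviation "Ft \<equiv> cdf Mt"
abbreviation "G \<equiv> inv_into S Fs"

lemma rd_s: "real_distribution Ms" by (rule real_distribution_density[OF ps])
lemma rd_t: "real_distribution Mt" by (rule real_distribution_density[OF pt])
interpretation s: real_distribution Ms by (rule rd_s)
interpretation t: real_distribution Mt by (rule rd_t)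
lemma na_s: "measure Ms {x} = 0" by (rule density_noatom) simp
lemma na_t: "measure Mt {x} = 0" by (rule density_noatom) simp

lemma mono_Fs: "mono Fs"
  using s.cdf_nondecreasing by (auto simp: mono_def)
lemma mono_Ft: "mono Ft"
  using t.cdf_nondecreasing by (auto simp: mono_def)

lemma Fs_meas[measurable]: "Fs \<in> borel_measurable borel" by (rule cdf_measurable[OF rd_s na_s])
lemma Ft_meas[measurable]: "Ft \<in> borel_measurable borel" by (rule cdf_measurable[OF rd_t na_t])
lemma Gm[measurable]: "G \<in> borel_measurable borel" by (rule G_meas[OF bij mono_Fs])

lemma AE_s_t: assumes "AE x in Ms. P x" shows "AE x in Mt. P x"
proof -
  have "AE x in lborel. 0 < fs x \<longrightarrow> P x" using assms by (subst (asm) AE_density) auto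
  then have "AE x in lborel. 0 < ft x \<longrightarrow> P x" using lr
    by eventually_elim (metis fs_nn less_eq_real_def less_irrefl)
  then show ?thesis by (subst AE_density) auto
qed

lemma flat_s: "AE z in Ms. Fs z \<in> {0<..<1} \<and> (\<forall>z'. Fs z' = Fs z \<longrightarrow> z' = z)"
  by (rule flat_AE[OF rd_s na_s])

lemma Q_eq: 
  defines "b \<equiv> (\<lambda>u. ft (G u) / fs (G u))"
  shows "(\<integral>v\<in>{0..Fs z0}. b v \<partial>lborel) = Ft z0"
proof -
  define u where "u = Fs z0"
  have u01: "0 \<le> u" "u \<le> 1" unfolding u_def
    using s.cdf_nonneg s.cdf_bounded_prob by auto
  have bm[measurable]: "b \<in> borel_measurable borel" unfolding b_def by measurable
  have bnn: "\<And>v. 0 \<le> b v" unfolding b_def using fs_nn ft_nn by simp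
  have "(\<integral>v\<in>{0..u}. b v \<partial>lborel) = integral\<^sup>L lborel (\<lambda>v. indicator {0..u} v * b v)"
    by (simp add: set_lebesgue_integral_def)
  also have "\<dots> = enn2real (\<integral>\<^sup>+ v. ennreal (indicator {0..u} v * b v) \<partial>lborel)"
    using bnn by (intro integral_eq_nn_integral) auto
  also have "(\<integral>\<^sup>+ v. ennreal (indicator {0..u} v * b v) \<partial>lborel) =
      (\<integral>\<^sup>+ v. ennreal (indicator {0..u} v * b v) \<partial>U01)"
    unfolding U01_def using u01
    by (subst nn_integral_density) (auto intro!: nn_integral_cong split: split_indicator)
  also have "\<dots> = (\<integral>\<^sup>+ z. ennreal (indicator {0..u} (Fs z) * b (Fs z)) \<partial>Ms)"
    by (subst distr_cdf[OF rd_s na_s, symmetric]) (subst nn_integral_distr; simp)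
  also have "\<dots> = (\<integral>\<^sup>+ z. ennreal (fs z) * ennreal (indicator {0..u} (Fs z) * b (Fs z)) \<partial>lborel)"
    by (subst nn_integral_density) auto
  also have "\<dots> = (\<integral>\<^sup>+ z. ennreal (ft z) * indicator {z. Fs z \<le> u} z \<partial>lborel)"
  proof (intro nn_integral_cong_AE)
    have "AE z in lborel. 0 < fs z \<longrightarrow> Fs z \<in> {0<..<1} \<and> (\<forall>z'. Fs z' = Fs z \<longrightarrow> z' = z)"
      using flat_s by (subst (asm) AE_density) auto
    then show "AE z in lborel. ennreal (fs z) * ennreal (indicator {0..u} (Fs z) * b (Fs z)) =
        ennreal (ft z) * indicator {z. Fs z \<le> u} z"
      using lr
    proof eventually_elim
      case (elim z)
      show ?case
      proof (cases "fs z = 0")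
        case True
        then show ?thesis using elim by simp
      next
        case False
        then have pos: "0 < fs z" using fs_nn[of z] by simp
        then have "Fs (G (Fs z)) = Fs z" using elim G_in[OF bij mono_Fs] by blast
        then have "G (Fs z) = z" using elim pos by blast
        then have "fs z * (indicator {0..u} (Fs z) * b (Fs z)) = ft z * indicator {z. Fs z \<le> u} z"
          using pos s.cdf_nonneg[of z] unfolding b_def
          by (auto split: split_indicator)
        moreover have "ennreal (fs z) * ennreal (indicator {0..u} (Fs z) * b (Fs z)) =
            ennreal (fs z * (indicator {0..u} (Fs z) * b (Fs z)))"
          using fs_nn bnn by (intro ennreal_mult[symmetric]) auto
        moreover have "ennreal (ft z) * indicator {z. Fs z \<le> u} z = ennreal (ft z * indicator {z. Fs z \<le> u} z)"
          by (simp split: split_indicator)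
        ultimately show ?thesis by simp
      qed
    qed
  qed
  also have "\<dots> = emeasure Mt {z. Fs z \<le> u}"
    by (subst emeasure_density) auto
  also have "\<dots> = emeasure Mt {..z0}"
  proof (rule emeasure_eq_AE)
    show "AE x in Mt. (x \<in> {z. Fs z \<le> u}) = (x \<in> {..z0})"
      using AE_s_t[OF flat_s]
    proof eventually_elim
      case (elim x)
      show ?case
      proof
        assume "x \<in> {z. Fs z \<le> u}"
        then have le: "Fs x \<le> Fs z0" by (simp add: u_def)
        show "x \<in> {..z0}"
        proof (rule ccontr)
          assume "x \<notin> {..z0}"
          then have "Fs z0 \<le> Fs x" using mono_Fs by (auto simp: mono_def)
          then have "Fs z0 = Fs x" using le by simp
          then show False using elim \<open>x \<notin> {..z0}\<close> by auto
        qed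
      next
        assume "x \<in> {..z0}"
        then show "x \<in> {z. Fs z \<le> u}" using mono_Fs by (auto simp: mono_def u_def)
      qed
    qed
  qed auto
  finally show ?thesis
    by (simp add: u_def cdf_def2 measure_def)
qed

end


context otsetup
begin

interpretation s: real_distribution Ms by (rule rd_s)
interpretation t: real_distribution Mt by (rule rd_t)

lemma flat_t: "AE z in Mt. Ft z \<in> {0<..<1} \<and> (\<forall>z'. Ft z' = Ft z \<longrightarrow> z' = z)"
  by (rule flat_AE[OF rd_t na_t])

lemma Tm[measurable]: "(\<lambda>z. G (Ft z)) \<in> borel_measurable borel" by measurable

lemma distr_T: "distr Mt borel (\<lambda>z. G (Ft z)) = Ms"
proof -
  have "distr Mt borel (\<lambda>z. G (Ft z)) = distr (distr Mt borel Ft) borel G"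
    by (subst distr_distr) (auto simp: comp_def)
  also have "\<dots> = distr U01 borel G" by (simp add: distr_cdf[OF rd_t na_t])
  also have "\<dots> = Ms"
  proof (rule cdf_unique)
    interpret u: real_distribution U01 by (rule real_distribution_U01)
    show "real_distribution (distr U01 borel G)" by simp
    show "real_distribution Ms" by (rule rd_s)
    show "cdf (distr U01 borel G) = Fs"
    proof
      fix x
      have "cdf (distr U01 borel G) x = measure (distr U01 borel G) {..x}" by (rule cdf_def2)
      also have "\<dots> = measure U01 (G -` {..x} \<inter> space U01)" by (rule measure_distr) measurable
      also have "\<dots> = measure U01 {..Fs x}"
      proof (rule measure_eq_AE)
        have ae0: "AE v in lborel. v \<notin> {0, 1, Fs x}"
          by (rule AE_not_in) (rule countable_imp_null_set_lborel, simp)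
        have "AE v in lborel. 0 < indicator {0..1::real} v \<longrightarrow> v \<notin> {0, 1, Fs x}"
          using ae0 by (rule eventually_mono) simp
        then have "AE v in U01. v \<notin> {0, 1, Fs x}" unfolding U01_def
          by (subst AE_density) auto
        moreover have "AE v in U01. v \<in> {0..1}" unfolding U01_def
          by (subst AE_density) (auto split: split_indicator)
        ultimately show "AE v in U01. (v \<in> G -` {..x} \<inter> space U01) = (v \<in> {..Fs x})"
        proof eventually_elim
          case (elim v)
          then have v: "v \<in> {0<..<1}" by auto
          show ?case
          proof
            assume "v \<in> G -` {..x} \<inter> space U01"
            then have "Fs (G v) \<le> Fs x" using mono_Fs by (auto simp: mono_def)
            then show "v \<in> {..Fs x}" using G_in[OF bij mono_Fs v] by simp
          next
            assume "v \<in> {..Fs x}"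
            then have "v < Fs x" using elim by auto
            show "v \<in> G -` {..x} \<inter> space U01"
            proof (rule ccontr)
              assume "v \<notin> G -` {..x} \<inter> space U01"
              then have "x \<le> G v" by auto
              then have "Fs x \<le> Fs (G v)" using mono_Fs by (auto simp: mono_def)
              then show False using G_in[OF bij mono_Fs v] \<open>v < Fs x\<close> by simp
            qed
          qed
        qed
      next
        have "G -` {..x} \<inter> space borel \<in> sets borel" by (rule measurable_sets[OF Gm]) simp
        then show "G -` {..x} \<inter> space U01 \<in> sets U01" by simp
      qed auto
      also have "\<dots> = Fs x" using cdf_U01[of "Fs x"] s.cdf_nonneg[of x] s.cdf_bounded_prob[of x]
        by (simp add: cdf_def2)
      finally show "cdf (distr U01 borel G) x = Fs x" .
    qed
  qed
  finally show ?thesis .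
qed

lemma emeasure_Ft_interval: "emeasure Mt {z. Ft z \<in> {a..b}} \<le> ennreal (b - a)"
proof -
  have "emeasure Mt {z. Ft z \<in> {a..b}} = emeasure (distr Mt borel Ft) {a..b}"
    by (subst emeasure_distr) (auto simp: vimage_def)
  also have "\<dots> = emeasure lborel ({a..b} \<inter> {0..1})"
    by (simp add: distr_cdf[OF rd_t na_t] emeasure_U01)
  also have "\<dots> \<le> emeasure lborel {a..b}" by (intro emeasure_mono) auto
  also have "\<dots> = ennreal (b - a)"
    by (cases "a \<le> b") (auto simp: ennreal_neg)
  finally show ?thesis .
qed

lemma bound1: "emeasure Mt {z. t \<le> z \<and> G (Ft z) < s} \<le> ennreal (Fs s - Ft t)"
proof -
  have "emeasure Mt {z. t \<le> z \<and> G (Ft z) < s} \<le> emeasure Mt {z. Ft z \<in> {Ft t..Fs s}}"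
  proof (rule emeasure_mono_AE)
    show "AE z in Mt. z \<in> {z. t \<le> z \<and> G (Ft z) < s} \<longrightarrow> z \<in> {z. Ft z \<in> {Ft t..Fs s}}"
      using flat_t
    proof eventually_elim
      case (elim z)
      show ?case
      proof
        assume "z \<in> {z. t \<le> z \<and> G (Ft z) < s}"
        then have 1: "t \<le> z" "G (Ft z) < s" by auto
        have "Ft t \<le> Ft z" using 1 mono_Ft by (auto simp: mono_def)
        moreover have "Fs (G (Ft z)) \<le> Fs s" using 1 mono_Fs by (auto simp: mono_def)
        then have "Ft z \<le> Fs s" using G_in[OF bij mono_Fs, of "Ft z"] elim by simp
        ultimately show "z \<in> {z. Ft z \<in> {Ft t..Fs s}}" by simp
      qed
    qed
  qed auto
  also have "\<dots> \<le> ennreal (Fs s - Ft t)" by (rule emeasure_Ft_interval)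
  finally show ?thesis .
qed

lemma bound2: "emeasure Mt {z. z < s \<and> t \<le> G (Ft z)} \<le> ennreal (Ft s - Fs t)"
proof -
  have "emeasure Mt {z. z < s \<and> t \<le> G (Ft z)} \<le> emeasure Mt {z. Ft z \<in> {Fs t..Ft s}}"
  proof (rule emeasure_mono_AE)
    show "AE z in Mt. z \<in> {z. z < s \<and> t \<le> G (Ft z)} \<longrightarrow> z \<in> {z. Ft z \<in> {Fs t..Ft s}}"
      using flat_t
    proof eventually_elim
      case (elim z)
      show ?case
      proof
        assume "z \<in> {z. z < s \<and> t \<le> G (Ft z)}"
        then have 1: "z < s" "t \<le> G (Ft z)" by auto
        have "Ft z \<le> Ft s" using 1 mono_Ft by (auto simp: mono_def)
        moreover have "Fs t \<le> Fs (G (Ft z))" using 1 mono_Fs by (auto simp: mono_def)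
        then have "Fs t \<le> Ft z" using G_in[OF bij mono_Fs, of "Ft z"] elim by simp
        ultimately show "z \<in> {z. Ft z \<in> {Fs t..Ft s}}" by simp
      qed
    qed
  qed auto
  also have "\<dots> \<le> ennreal (Ft s - Fs t)" by (rule emeasure_Ft_interval)
  finally show ?thesis .
qed

lemma measure_lessThan_cdf:
  assumes "real_distribution M" "\<And>x. measure M {x} = 0"
  shows "measure M {..<x} = cdf M x"
proof -
  interpret real_distribution M by fact
  have "measure M {..<x} = measure M {..x}"
  proof (rule measure_eq_AE)
    have "{x} \<in> null_sets M" using assms(2)[of x] by (auto simp: emeasure_eq_measure intro!: null_setsI)
    then show "AE y in M. (y \<in> {..<x}) = (y \<in> {..x})" by (rule AE_not_in[THEN eventually_mono]) auto
  qed auto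
  then show ?thesis by (simp add: cdf_def2)
qed

lemma coupling_bounds:
  assumes "\<pi> \<in> couplings Mt Ms"
  shows "ennreal (Fs s - Ft t) \<le> emeasure \<pi> {xy. t \<le> fst xy \<and> snd xy < s}"
    and "ennreal (Ft s - Fs t) \<le> emeasure \<pi> {xy. fst xy < s \<and> t \<le> snd xy}"
proof -
  have sets: "sets \<pi> = sets borel" and ps\<pi>: "prob_space \<pi>" and m1: "distr \<pi> borel fst = Mt"
    and m2: "distr \<pi> borel snd = Ms"
    using assms by (auto simp: couplings_def)
  interpret p: prob_space \<pi> by (rule ps\<pi>)
  have sp: "space \<pi> = UNIV" using sets_eq_imp_space_eq[OF sets] by simp
  have [measurable]: "fst \<in> borel_measurable \<pi>" "snd \<in> borel_measurable \<pi>"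
    by (auto simp: measurable_cong_sets[OF sets refl] borel_prod[symmetric])
  have mf: "measure \<pi> {xy. fst xy < a} = Ft a" for a
  proof -
    have "measure \<pi> {xy. fst xy < a} = measure (distr \<pi> borel fst) {..<a}"
      by (subst measure_distr) (auto simp: sp vimage_def)
    then show ?thesis using m1 measure_lessThan_cdf[OF rd_t na_t] by simp
  qed
  have ms: "measure \<pi> {xy. snd xy < a} = Fs a" for a
  proof -
    have "measure \<pi> {xy. snd xy < a} = measure (distr \<pi> borel snd) {..<a}"
      by (subst measure_distr) (auto simp: sp vimage_def)
    then show ?thesis using m2 measure_lessThan_cdf[OF rd_s na_s] by simp
  qed
  have Pset: "{xy. P xy} \<in> sets \<pi>" if "Measurable.pred \<pi> P" for P
  proof -
    have "{xy \<in> space \<pi>. P xy} \<in> sets \<pi>" using that by measurable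
    then show ?thesis by (simp add: sp)
  qed
  have [simp]: "{xy. t \<le> fst xy \<and> snd xy < s} \<in> sets \<pi>" "{xy. fst xy < t} \<in> sets \<pi>"
    "{xy. fst xy < s \<and> t \<le> snd xy} \<in> sets \<pi>" "{xy. snd xy < t} \<in> sets \<pi>"
    by (intro Pset; measurable)+
  have "{xy. t \<le> fst xy \<and> snd xy < s} \<union> {xy. fst xy < t} \<in> sets \<pi>" by (intro sets.Un) simp_all
  then have "Fs s \<le> measure \<pi> ({xy. t \<le> fst xy \<and> snd xy < s} \<union> {xy. fst xy < t})"
    unfolding ms[symmetric] by (intro p.finite_measure_mono) auto
  also have "\<dots> \<le> measure \<pi> {xy. t \<le> fst xy \<and> snd xy < s} + measure \<pi> {xy. fst xy < t}"
    by (rule measure_Un_le) simp_all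
  finally show "ennreal (Fs s - Ft t) \<le> emeasure \<pi> {xy. t \<le> fst xy \<and> snd xy < s}"
    by (simp add: mf p.emeasure_eq_measure ennreal_leI)
  have "{xy. fst xy < s \<and> t \<le> snd xy} \<union> {xy. snd xy < t} \<in> sets \<pi>" by (intro sets.Un) simp_all
  then have "Ft s \<le> measure \<pi> ({xy. fst xy < s \<and> t \<le> snd xy} \<union> {xy. snd xy < t})"
    unfolding mf[symmetric] by (intro p.finite_measure_mono) auto
  also have "\<dots> \<le> measure \<pi> {xy. fst xy < s \<and> t \<le> snd xy} + measure \<pi> {xy. snd xy < t}"
    by (rule measure_Un_le) simp_all
  finally show "ennreal (Ft s - Fs t) \<le> emeasure \<pi> {xy. fst xy < s \<and> t \<le> snd xy}"
    by (simp add: ms p.emeasure_eq_measure ennreal_leI)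
qed

end


lemma pow_rep_nonneg:
  fixes p w :: real
  assumes p: "1 < p" and w: "0 \<le> w"
  shows "ennreal (w powr p) = (\<integral>\<^sup>+ b. ennreal (if 0 < b then p * (p - 1) * b powr (p - 2) else 0) *
           (ennreal (max 0 (w - b)) + ennreal (max 0 (- w - b))) \<partial>lborel)"
proof -
  define f where "f = (\<lambda>b::real. p * (p - 1) * b powr (p - 2) * (w - b))"
  have i1: "((\<lambda>x. x powr (p - 2)) has_integral (w powr (p - 1) / (p - 1))) {0..w}"
    using has_integral_powr_from_0[of "p - 2" w] p w by simp
  have i2: "((\<lambda>x. x powr (p - 1)) has_integral (w powr p / p)) {0..w}"
    using has_integral_powr_from_0[of "p - 1" w] p w by simp
  have "((\<lambda>x. (p * (p - 1) * w) * x powr (p - 2) - (p * (p - 1)) * x powr (p - 1)) has_integral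
      ((p * (p - 1) * w) * (w powr (p - 1) / (p - 1)) - (p * (p - 1)) * (w powr p / p))) {0..w}"
    by (intro has_integral_diff has_integral_mult_right i1 i2)
  moreover have "(p * (p - 1) * w) * (w powr (p - 1) / (p - 1)) - (p * (p - 1)) * (w powr p / p) = w powr p"
  proof -
    have "w * w powr (p - 1) = w powr p"
    proof (cases "w = 0")
      case False
      have "w powr p = w powr (1 + (p - 1))" by simp
      also have "\<dots> = w powr 1 * w powr (p - 1)" by (rule powr_add)
      also have "\<dots> = w * w powr (p - 1)" using w by simp
      finally show ?thesis by simp
    qed simp
    then show ?thesis using p by (simp add: field_simps)
  qed
  moreover have "(p * (p - 1) * w) * x powr (p - 2) - (p * (p - 1)) * x powr (p - 1) = f x"
    if "x \<in> {0..w}" for x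
  proof (cases "x = 0")
    case False
    then have x0: "0 < x" using that by simp
    have "x powr (p - 1) = x powr ((p - 2) + 1)" by simp
    also have "\<dots> = x powr (p - 2) * x powr 1" by (rule powr_add)
    also have "\<dots> = x powr (p - 2) * x" using x0 by simp
    finally have "x powr (p - 2) * x = x powr (p - 1)" by simp
    then show ?thesis unfolding f_def by (simp add: algebra_simps)
  qed (simp add: f_def)
  ultimately have hi: "(f has_integral w powr p) {0..w}"
    by (metis (no_types, lifting) has_integral_eq)
  have fnn: "0 \<le> f x" if "x \<in> {0..w}" for x using that p unfolding f_def by auto
  have "(\<integral>\<^sup>+ x. ennreal (indicator {0..w} x * f x) \<partial>lborel) = ennreal (w powr p)"
    using nn_integral_has_integral_lebesgue[OF fnn hi] by simp
  moreover have "(\<integral>\<^sup>+ x. ennreal (indicator {0..w} x * f x) \<partial>lborel) =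
      (\<integral>\<^sup>+ b. ennreal (if 0 < b then p * (p - 1) * b powr (p - 2) else 0) *
           (ennreal (max 0 (w - b)) + ennreal (max 0 (- w - b))) \<partial>lborel)"
  proof (intro nn_integral_cong)
    fix b :: real
    show "ennreal (indicator {0..w} b * f b) = ennreal (if 0 < b then p * (p - 1) * b powr (p - 2) else 0) *
           (ennreal (max 0 (w - b)) + ennreal (max 0 (- w - b)))"
    proof (cases "0 < b")
      case True
      have m2: "max 0 (- w - b) = 0" using True w by simp
      show ?thesis
      proof (cases "b \<le> w")
        case True2: True
        then show ?thesis using True p m2 unfolding f_def
          by (simp add: ennreal_mult[symmetric] indicator_def)
      next
        case False
        then show ?thesis using True m2 by (simp add: indicator_def)
      qed
    next
      case False
      then show ?thesis by (cases "b = 0") (auto simp: indicator_def f_def)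
    qed
  qed
  ultimately show ?thesis by simp
qed

definition rho :: "real \<Rightarrow> real \<Rightarrow> ennreal" where
  "rho p b = ennreal (if 0 < b then p * (p - 1) * b powr (p - 2) else 0)"

definition kfun :: "real \<Rightarrow> real \<Rightarrow> ennreal" where
  "kfun w b = ennreal (max 0 (w - b)) + ennreal (max 0 (- w - b))"

lemma rho_meas[measurable]: "rho p \<in> borel_measurable borel"
  unfolding rho_def by measurable

lemma kfun_meas[measurable]: "(\<lambda>(w, b). kfun w b) \<in> borel_measurable borel"
proof -
  have "(\<lambda>x::real\<times>real. ennreal (max 0 (fst x - snd x)) + ennreal (max 0 (- fst x - snd x))) \<in> borel_measurable borel"
    by (simp add: borel_prod[symmetric])
  then show ?thesis by (simp add: kfun_def case_prod_beta)
qed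

lemma pow_rep:
  fixes p w :: real
  assumes p: "1 < p"
  shows "ennreal (\<bar>w\<bar> powr p) = (\<integral>\<^sup>+ b. rho p b * kfun w b \<partial>lborel)"
proof (cases "0 \<le> w")
  case True
  then show ?thesis using pow_rep_nonneg[OF p True] by (simp add: rho_def kfun_def)
next
  case False
  then have "ennreal (\<bar>w\<bar> powr p) = ennreal ((- w) powr p)" by simp
  also have "\<dots> = (\<integral>\<^sup>+ b. rho p b * kfun (- w) b \<partial>lborel)"
    using pow_rep_nonneg[OF p, of "- w"] False by (simp add: rho_def kfun_def)
  also have "\<dots> = (\<integral>\<^sup>+ b. rho p b * kfun w b \<partial>lborel)"
    by (simp add: kfun_def add.commute)
  finally show ?thesis .
qed



lemma sets_pi_lborel:
  fixes \<pi> :: "(real \<times> real) measure"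
  assumes "sets \<pi> = sets borel"
  shows "sets (\<pi> \<Otimes>\<^sub>M (lborel::real measure)) = sets ((borel::(real \<times> real) measure) \<Otimes>\<^sub>M (borel::real measure))"
  by (rule sets_pair_measure_cong) (simp_all add: assms)

lemma fst_borel[measurable]: "fst \<in> borel_measurable (borel :: (real \<times> real) measure)"
  unfolding borel_prod[symmetric] by measurable

lemma snd_borel[measurable]: "snd \<in> borel_measurable (borel :: (real \<times> real) measure)"
  unfolding borel_prod[symmetric] by measurable

lemma layer:
  fixes \<pi> :: "(real \<times> real) measure" and g1 g2 :: "real \<times> real \<Rightarrow> real" and b :: real
  assumes sets: "sets \<pi> = sets borel" and sf: "sigma_finite_measure \<pi>"
    and g1[measurable]: "g1 \<in> borel_measurable borel"
    and g2[measurable]: "g2 \<in> borel_measurable borel"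
  shows "(\<integral>\<^sup>+ xy. ennreal (max 0 (g1 xy - g2 xy - b)) \<partial>\<pi>) =
         (\<integral>\<^sup>+ t. emeasure \<pi> {xy. t \<le> g1 xy \<and> g2 xy < t - b} \<partial>lborel)"
proof -
  interpret pair_sigma_finite \<pi> "lborel :: real measure"
    by (intro pair_sigma_finite.intro sf sigma_finite_lborel)
  have sp: "space \<pi> = UNIV" using sets_eq_imp_space_eq[OF sets] by simp
  define h where "h = (\<lambda>xy (t::real). if t \<le> g1 xy \<and> g2 xy < t - b then 1 else (0::ennreal))"
  have hm: "case_prod h \<in> borel_measurable (\<pi> \<Otimes>\<^sub>M lborel)"
  proof -
    have "(\<lambda>q. if snd q \<le> g1 (fst q) \<and> g2 (fst q) < snd q - b then 1 else (0::ennreal))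
        \<in> borel_measurable ((borel::(real \<times> real) measure) \<Otimes>\<^sub>M (borel::real measure))"
      by measurable
    moreover have "case_prod h = (\<lambda>q. if snd q \<le> g1 (fst q) \<and> g2 (fst q) < snd q - b then 1 else (0::ennreal))"
      by (simp add: h_def fun_eq_iff)
    ultimately show ?thesis
      by (simp add: measurable_cong_sets[OF sets_pi_lborel[OF sets] refl])
  qed
  have s1: "ennreal (max 0 (g1 xy - g2 xy - b)) = (\<integral>\<^sup>+ t. h xy t \<partial>lborel)" for xy
  proof -
    have "(\<integral>\<^sup>+ t. h xy t \<partial>lborel) = (\<integral>\<^sup>+ t. indicator {g2 xy + b <.. g1 xy} t \<partial>lborel)"
      by (intro nn_integral_cong) (auto simp: h_def indicator_def)
    also have "\<dots> = emeasure lborel {g2 xy + b <.. g1 xy}" by simp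
    also have "\<dots> = ennreal (max 0 (g1 xy - g2 xy - b))"
      by (cases "g2 xy + b \<le> g1 xy") auto
    finally show ?thesis by simp
  qed
  have s3: "(\<integral>\<^sup>+ xy. h xy t \<partial>\<pi>) = emeasure \<pi> {xy. t \<le> g1 xy \<and> g2 xy < t - b}" for t
  proof -
    have gm1: "g1 \<in> borel_measurable \<pi>" "g2 \<in> borel_measurable \<pi>"
      using g1 g2 by (simp_all add: measurable_cong_sets[OF sets refl])
    have "{xy \<in> space \<pi>. t \<le> g1 xy \<and> g2 xy < t - b} \<in> sets \<pi>" using gm1 by measurable
    then have A: "{xy. t \<le> g1 xy \<and> g2 xy < t - b} \<in> sets \<pi>" by (simp add: sp)
    have "(\<integral>\<^sup>+ xy. h xy t \<partial>\<pi>) = (\<integral>\<^sup>+ xy. indicator {xy. t \<le> g1 xy \<and> g2 xy < t - b} xy \<partial>\<pi>)"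
      by (intro nn_integral_cong) (auto simp: h_def indicator_def)
    also have "\<dots> = emeasure \<pi> {xy. t \<le> g1 xy \<and> g2 xy < t - b}" using A by simp
    finally show ?thesis .
  qed
  have "(\<integral>\<^sup>+ xy. ennreal (max 0 (g1 xy - g2 xy - b)) \<partial>\<pi>) = (\<integral>\<^sup>+ xy. (\<integral>\<^sup>+ t. h xy t \<partial>lborel) \<partial>\<pi>)"
    by (rule nn_integral_cong) (rule s1)
  also have "\<dots> = (\<integral>\<^sup>+ t. (\<integral>\<^sup>+ xy. h xy t \<partial>\<pi>) \<partial>lborel)"
    by (rule Fubini'[OF hm, symmetric])
  also have "\<dots> = (\<integral>\<^sup>+ t. emeasure \<pi> {xy. t \<le> g1 xy \<and> g2 xy < t - b} \<partial>lborel)"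
    by (simp add: s3)
  finally show ?thesis .
qed

definition Phi :: "(real \<times> real) measure \<Rightarrow> real \<Rightarrow> ennreal" where
  "Phi \<pi> b = (\<integral>\<^sup>+ t. emeasure \<pi> {xy. t \<le> fst xy \<and> snd xy < t - b} \<partial>lborel) +
             (\<integral>\<^sup>+ t. emeasure \<pi> {xy. t \<le> snd xy \<and> fst xy < t - b} \<partial>lborel)"

lemma kint:
  fixes \<pi> :: "(real \<times> real) measure"
  assumes sets: "sets \<pi> = sets borel" and sf: "sigma_finite_measure \<pi>"
  shows "(\<integral>\<^sup>+ xy. kfun (fst xy - snd xy) b \<partial>\<pi>) = Phi \<pi> b"
proof -
  have m: "f \<in> borel_measurable \<pi>" if "f \<in> borel_measurable borel" for f :: "real \<times> real \<Rightarrow> ennreal"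
    using that by (simp add: measurable_cong_sets[OF sets refl])
  have "(\<integral>\<^sup>+ xy. kfun (fst xy - snd xy) b \<partial>\<pi>) =
      (\<integral>\<^sup>+ xy. ennreal (max 0 (fst xy - snd xy - b)) + ennreal (max 0 (snd xy - fst xy - b)) \<partial>\<pi>)"
    by (intro nn_integral_cong) (simp add: kfun_def)
  also have "\<dots> = (\<integral>\<^sup>+ xy. ennreal (max 0 (fst xy - snd xy - b)) \<partial>\<pi>) +
      (\<integral>\<^sup>+ xy. ennreal (max 0 (snd xy - fst xy - b)) \<partial>\<pi>)"
    by (intro nn_integral_add m) measurable
  also have "\<dots> = Phi \<pi> b"
  proof -
    have l1: "(\<integral>\<^sup>+ xy. ennreal (max 0 (fst xy - snd xy - b)) \<partial>\<pi>) =
        (\<integral>\<^sup>+ t. emeasure \<pi> {xy. t \<le> fst xy \<and> snd xy < t - b} \<partial>lborel)"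
      by (rule layer[OF sets sf]) measurable
    have l2: "(\<integral>\<^sup>+ xy. ennreal (max 0 (snd xy - fst xy - b)) \<partial>\<pi>) =
        (\<integral>\<^sup>+ t. emeasure \<pi> {xy. t \<le> snd xy \<and> fst xy < t - b} \<partial>lborel)"
      by (rule layer[OF sets sf]) measurable
    show ?thesis by (simp only: Phi_def l1 l2)
  qed
  finally show ?thesis .
qed

lemma cost_rep_gt1:
  fixes \<pi> :: "(real \<times> real) measure"
  assumes sets: "sets \<pi> = sets borel" and sf: "sigma_finite_measure \<pi>" and p: "1 < p"
  shows "(\<integral>\<^sup>+ xy. ennreal (\<bar>fst xy - snd xy\<bar> powr p) \<partial>\<pi>) = (\<integral>\<^sup>+ b. rho p b * Phi \<pi> b \<partial>lborel)"
proof -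
  interpret pair_sigma_finite \<pi> "lborel :: real measure"
    by (intro pair_sigma_finite.intro sf sigma_finite_lborel)
  have hm: "case_prod (\<lambda>xy b. rho p b * kfun (fst xy - snd xy) b) \<in> borel_measurable (\<pi> \<Otimes>\<^sub>M lborel)"
  proof -
    have "(\<lambda>q. rho p (snd q) * kfun (fst (fst q) - snd (fst q)) (snd q))
        \<in> borel_measurable ((borel::(real \<times> real) measure) \<Otimes>\<^sub>M (borel::real measure))"
      unfolding kfun_def by measurable
    then show ?thesis
      by (simp add: measurable_cong_sets[OF sets_pi_lborel[OF sets] refl] case_prod_beta')
  qed
  have km: "(\<lambda>xy. kfun (fst xy - snd xy) b) \<in> borel_measurable \<pi>" for b
  proof -
    have "(\<lambda>xy. kfun (fst xy - snd xy) b) \<in> borel_measurable borel"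
      unfolding kfun_def by measurable
    then show ?thesis by (simp add: measurable_cong_sets[OF sets refl])
  qed
  have "(\<integral>\<^sup>+ xy. ennreal (\<bar>fst xy - snd xy\<bar> powr p) \<partial>\<pi>) =
      (\<integral>\<^sup>+ xy. (\<integral>\<^sup>+ b. rho p b * kfun (fst xy - snd xy) b \<partial>lborel) \<partial>\<pi>)"
    using pow_rep[OF p] by simp
  also have "\<dots> = (\<integral>\<^sup>+ b. (\<integral>\<^sup>+ xy. rho p b * kfun (fst xy - snd xy) b \<partial>\<pi>) \<partial>lborel)"
    by (rule Fubini'[OF hm, symmetric])
  also have "\<dots> = (\<integral>\<^sup>+ b. rho p b * (\<integral>\<^sup>+ xy. kfun (fst xy - snd xy) b \<partial>\<pi>) \<partial>lborel)"
    by (intro nn_integral_cong nn_integral_cmult km)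
  also have "\<dots> = (\<integral>\<^sup>+ b. rho p b * Phi \<pi> b \<partial>lborel)"
    by (simp add: kint[OF sets sf])
  finally show ?thesis .
qed

lemma cost_rep_1:
  fixes \<pi> :: "(real \<times> real) measure"
  assumes sets: "sets \<pi> = sets borel" and sf: "sigma_finite_measure \<pi>"
  shows "(\<integral>\<^sup>+ xy. ennreal (\<bar>fst xy - snd xy\<bar> powr 1) \<partial>\<pi>) = Phi \<pi> 0"
proof -
  have "ennreal (\<bar>w\<bar> powr 1) = kfun w 0" for w :: real
    by (cases "0 \<le> w") (auto simp: kfun_def)
  then have "(\<integral>\<^sup>+ xy. ennreal (\<bar>fst xy - snd xy\<bar> powr 1) \<partial>\<pi>) = (\<integral>\<^sup>+ xy. kfun (fst xy - snd xy) 0 \<partial>\<pi>)"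
    by simp
  also have "\<dots> = Phi \<pi> 0" by (rule kint[OF sets sf])
  finally show ?thesis .
qed

lemma Phi_mono:
  assumes "\<And>t s. emeasure \<pi>2 {xy. t \<le> fst xy \<and> snd xy < s} \<le> emeasure \<pi>1 {xy. t \<le> fst xy \<and> snd xy < s}"
    and "\<And>t s. emeasure \<pi>2 {xy. t \<le> snd xy \<and> fst xy < s} \<le> emeasure \<pi>1 {xy. t \<le> snd xy \<and> fst xy < s}"
  shows "Phi \<pi>2 b \<le> Phi \<pi>1 b"
  unfolding Phi_def by (intro add_mono nn_integral_mono assms)



lemma vec_nth_meas[measurable]: "(\<lambda>q::real ^ 'k. q $ y) \<in> borel_measurable borel"
  by (intro borel_measurable_continuous_onI continuous_intros)

lemma ent_loss_meas[measurable]: "ent_loss \<in> borel_measurable (borel :: (real ^ 'k) measure)"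
  unfolding ent_loss_def[abs_def] by measurable

context otsetup
begin

abbreviation "T \<equiv> (\<lambda>z. G (Ft z))"
abbreviation "piT \<equiv> distr Mt borel (\<lambda>z. (z, T z))"

lemma pairT_meas[measurable]: "(\<lambda>z. (z, T z)) \<in> measurable borel (borel :: (real \<times> real) measure)"
  unfolding borel_prod[symmetric] by measurable

lemma piT_coupling: "piT \<in> couplings Mt Ms"
proof -
  interpret t: prob_space Mt by (rule pt)
  have "prob_space piT" by (rule t.prob_space_distr) simp
  moreover have "distr piT borel fst = Mt"
  proof -
    have "distr piT borel fst = distr Mt borel (fst \<circ> (\<lambda>z. (z, T z)))"
      by (intro distr_distr) simp_all
    also have "\<dots> = distr Mt borel (\<lambda>z. z)" by (simp add: comp_def)
    also have "\<dots> = Mt" by (rule distr_id2) simp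
    finally show ?thesis .
  qed
  moreover have "distr piT borel snd = Ms"
  proof -
    have "distr piT borel snd = distr Mt borel (snd \<circ> (\<lambda>z. (z, T z)))"
      by (intro distr_distr) simp_all
    also have "\<dots> = Ms" using distr_T by (simp add: comp_def)
    finally show ?thesis .
  qed
  ultimately show ?thesis unfolding couplings_def by simp
qed

lemma cost_piT: "(\<integral>\<^sup>+ xy. ennreal (\<bar>fst xy - snd xy\<bar> powr p) \<partial>piT) = (\<integral>\<^sup>+ z. ennreal (\<bar>z - T z\<bar> powr p) \<partial>Mt)"
  by (subst nn_integral_distr) simp_all

lemma piT_bounds:
  assumes "\<pi> \<in> couplings Mt Ms"
  shows "emeasure piT {xy. t \<le> fst xy \<and> snd xy < s} \<le> emeasure \<pi> {xy. t \<le> fst xy \<and> snd xy < s}"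
    and "emeasure piT {xy. t \<le> snd xy \<and> fst xy < s} \<le> emeasure \<pi> {xy. t \<le> snd xy \<and> fst xy < s}"
proof -
  have A1: "{xy. t \<le> fst xy \<and> snd xy < s} \<in> sets (borel :: (real \<times> real) measure)"
  proof -
    have "{xy \<in> space borel. t \<le> fst xy \<and> snd xy < s} \<in> sets (borel :: (real \<times> real) measure)" by measurable
    then show ?thesis by simp
  qed
  have A2: "{xy. t \<le> snd xy \<and> fst xy < s} \<in> sets (borel :: (real \<times> real) measure)"
  proof -
    have "{xy \<in> space borel. t \<le> snd xy \<and> fst xy < s} \<in> sets (borel :: (real \<times> real) measure)" by measurable
    then show ?thesis by simp
  qed
  have "emeasure piT {xy. t \<le> fst xy \<and> snd xy < s} = emeasure Mt {z. t \<le> z \<and> T z < s}"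
    using A1 by (subst emeasure_distr) (auto simp: vimage_def)
  also have "\<dots> \<le> ennreal (Fs s - Ft t)" by (rule bound1)
  also have "\<dots> \<le> emeasure \<pi> {xy. t \<le> fst xy \<and> snd xy < s}" by (rule coupling_bounds(1)[OF assms])
  finally show "emeasure piT {xy. t \<le> fst xy \<and> snd xy < s} \<le> emeasure \<pi> {xy. t \<le> fst xy \<and> snd xy < s}" .
  have "emeasure piT {xy. t \<le> snd xy \<and> fst xy < s} = emeasure Mt {z. z < s \<and> t \<le> T z}"
    using A2 by (subst emeasure_distr) (auto simp: vimage_def conj_commute)
  also have "\<dots> \<le> ennreal (Ft s - Fs t)" by (rule bound2)
  also have "\<dots> \<le> emeasure \<pi> {xy. fst xy < s \<and> t \<le> snd xy}" by (rule coupling_bounds(2)[OF assms])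
  also have "{xy. fst xy < s \<and> t \<le> snd xy} = {xy. t \<le> snd xy \<and> fst xy < s}" by auto
  finally show "emeasure piT {xy. t \<le> snd xy \<and> fst xy < s} \<le> emeasure \<pi> {xy. t \<le> snd xy \<and> fst xy < s}" .
qed

lemma optimal:
  assumes "\<pi> \<in> couplings Mt Ms" and p: "1 \<le> p"
  shows "(\<integral>\<^sup>+ z. ennreal (\<bar>z - T z\<bar> powr p) \<partial>Mt) \<le> (\<integral>\<^sup>+ xy. ennreal (\<bar>fst xy - snd xy\<bar> powr p) \<partial>\<pi>)"
proof -
  have sets: "sets \<pi> = sets borel" and sf: "sigma_finite_measure \<pi>"
    using assms by (auto simp: couplings_def intro: prob_space_imp_sigma_finite)
  have setsT: "sets piT = sets borel" by simp
  have sfT: "sigma_finite_measure piT"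
    using piT_coupling by (auto simp: couplings_def intro: prob_space_imp_sigma_finite)
  have PM: "Phi piT b \<le> Phi \<pi> b" for b
    by (intro Phi_mono piT_bounds[OF assms(1)])
  show ?thesis
  proof (cases "p = 1")
    case True
    then show ?thesis
      using cost_rep_1[OF sets sf] cost_rep_1[OF setsT sfT] PM[of 0] cost_piT[of 1] by simp
  next
    case False
    then have p1: "1 < p" using p by simp
    have "(\<integral>\<^sup>+ b. rho p b * Phi piT b \<partial>lborel) \<le> (\<integral>\<^sup>+ b. rho p b * Phi \<pi> b \<partial>lborel)"
      by (intro nn_integral_mono mult_left_mono PM) simp
    then show ?thesis
      using cost_rep_gt1[OF sets sf p1] cost_rep_gt1[OF setsT sfT p1] cost_piT[of p] by simp
  qed
qed

lemma main:
  assumes p: "1 \<le> p"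
  shows "optimal_transport_map p Mt Ms T"
  unfolding optimal_transport_map_def
proof (intro conjI)
  show "T \<in> borel_measurable Mt" by simp
  show "distr Mt borel T = Ms" by (rule distr_T)
  show "(\<integral>\<^sup>+ z. ennreal (\<bar>z - T z\<bar> powr p) \<partial>Mt) = wasserstein_pow p Mt Ms"
    unfolding wasserstein_pow_def
  proof (rule antisym)
    show "(\<integral>\<^sup>+ z. ennreal (\<bar>z - T z\<bar> powr p) \<partial>Mt) \<le>
        (INF \<pi>\<in>couplings Mt Ms. \<integral>\<^sup>+ xy. ennreal (\<bar>fst xy - snd xy\<bar> powr p) \<partial>\<pi>)"
      using optimal[OF _ p] by (intro INF_greatest) auto
    show "(INF \<pi>\<in>couplings Mt Ms. \<integral>\<^sup>+ xy. ennreal (\<bar>fst xy - snd xy\<bar> powr p) \<partial>\<pi>) \<le>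
        (\<integral>\<^sup>+ z. ennreal (\<bar>z - T z\<bar> powr p) \<partial>Mt)"
      using INF_lower[OF piT_coupling, of "\<lambda>\<pi>. \<integral>\<^sup>+ xy. ennreal (\<bar>fst xy - snd xy\<bar> powr p) \<partial>\<pi>"]
      by (simp add: cost_piT)
  qed
qed

end

theorem proposition2:
  fixes f :: "real ^ 'm \<Rightarrow> real ^ 'd \<Rightarrow> real ^ 'k"
    and \<theta> \<omega> :: "real ^ 'm"
    and Ps Pt :: "(real ^ 'd) measure"
    and fs ft :: "real \<Rightarrow> real"
    and S :: "real set"
    and p :: real
  assumes Ps: "prob_space Ps" "sets Ps = sets borel"
    and Pt: "prob_space Pt" "sets Pt = sets borel"
    and f_prob: "\<And>w x. prob_vector (f w x)"
    and f_src_meas: "f \<theta> \<in> borel_measurable borel"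
    and f_ad_meas: "f (\<theta> + \<omega>) \<in> borel_measurable borel"
    and fs: "fs \<in> borel_measurable borel" "\<And>z. 0 \<le> fs z"
    and ft: "ft \<in> borel_measurable borel" "\<And>z. 0 \<le> ft z"
    and Zs_density: "distr Ps borel (\<lambda>x. ent_loss (f \<theta> x)) = density lborel fs"
    and Zt_density: "distr Pt borel (\<lambda>x. ent_loss (f (\<theta> + \<omega>) x)) = density lborel ft"
    and Fs_inv: "bij_betw (cdf (density lborel fs)) S {0<..<1}"
    and lr_exists: "AE z in lborel. fs z = 0 \<longrightarrow> ft z = 0"
    and p: "1 \<le> p"
  shows "optimal_transport_map p (density lborel ft) (density lborel fs)
           (\<lambda>z. let Fs = cdf (density lborel fs);
                    Fs_inv = inv_into S Fs;
                    b_opt = (\<lambda>u. ft (Fs_inv u) / fs (Fs_inv u));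
                    Q_opt = (\<lambda>u. \<integral>v\<in>{0..u}. b_opt v \<partial>lborel)
                in Fs_inv (Q_opt (Fs z)))"
proof -
  have ms: "(\<lambda>x. ent_loss (f \<theta> x)) \<in> measurable Ps borel"
    using f_src_meas by (simp add: measurable_cong_sets[OF Ps(2) refl])
  have mt: "(\<lambda>x. ent_loss (f (\<theta> + \<omega>) x)) \<in> measurable Pt borel"
    using f_ad_meas by (simp add: measurable_cong_sets[OF Pt(2) refl])
  have ps: "prob_space (density lborel fs)"
    unfolding Zs_density[symmetric] by (rule prob_space.prob_space_distr[OF Ps(1) ms])
  have pt: "prob_space (density lborel ft)"
    unfolding Zt_density[symmetric] by (rule prob_space.prob_space_distr[OF Pt(1) mt])
  interpret otsetup fs ft S
    by (rule otsetup.intro) (fact fs ft ps pt Fs_inv lr_exists)+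
  have eq: "(\<lambda>z. let Fs = cdf (density lborel fs);
                    Fs_inv = inv_into S Fs;
                    b_opt = (\<lambda>u. ft (Fs_inv u) / fs (Fs_inv u));
                    Q_opt = (\<lambda>u. \<integral>v\<in>{0..u}. b_opt v \<partial>lborel)
                in Fs_inv (Q_opt (Fs z))) = T"
    by (simp add: Let_def Q_eq fun_eq_iff)
  show ?thesis unfolding eq by (rule main[OF p])
qed


end
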